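(* Let $m$ be a positive integer, $\xi\in\mathbb Z_m$, $\Gamma=\widetilde{BS}(m,\xi)$, $n\ge1$ and $t_1,\dots,t_n\in\{0,\dots,m-1\}$. For integers $c,u_1,\dots,u_n$ let $$w(c,u_1,\dots,u_n)=a^{n+1}\,(ce_0)\,a^{-1}\,(-u_1e_0)\,a^{-1}\,(-u_2e_0)\,a^{-1}\cdots(-u_ne_0)\,a^{-1}\in\Gamma,$$ where $(ke_0)$ denotes the $k$-th power of $e_0$. The following are equivalent: (i) $w(m,t_1,\dots,t_n)\in E$; (ii) $w(m,t_1,\dots,t_n)\,e_0\,w(-m,-t_1,\dots,-t_n)\,e_0^{-1}=1$ in $\Gamma$; (iii) $t_i=r_i(\xi)$ for every $1\le i\le n$.
   Context: $\mathbb Z_m$ is the ring of $m$-adic integers. The functions $r_i$: $r_0(\xi)=0$, $s_0(\xi)=1$, and for $i\ge1$, $r_i(\xi)\in\{0,\dots,m-1\}$, $s_i(\xi)\in\mathbb Z_m$ unique with $\xi s_{i-1}(\xi)=ms_i(\xi)+r_i(\xi)$. Let $E$ be the free abelian group with basis $e_0,e_1,\dots$ (written additively), $E_{m,\xi}\le E$ with basis $me_0,\ e_i-r_i(\xi)e_0$ ($i\ge1$), $E_1\le E$ with basis $e_1,e_2,\dots$, and $\phi:E_{m,\xi}\to E_1$ the isomorphism $\phi(me_0)=e_1$, $\phi(e_i-r_i(\xi)e_0)=e_{i+1}$. $\widetilde{BS}(m,\xi)=\langle E,a\mid axa^{-1}=\phi(x)\ \forall x\in E_{m,\xi}\rangle$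 (HNN extension), with $E$ viewed as a subgroup. *)

theory Defs
  imports Main
begin

text \<open>An m-adic integer is represented by its compatible system of residues:
  x k is the residue of x modulo m^k, in the range 0 ..< m^k.\<close>

definition madic :: "nat \<Rightarrow> (nat \<Rightarrow> int) set" where
  "madic m = {x. \<forall>k. 0 \<le> x k \<and> x k < int m ^ k \<and> x (Suc k) mod int m ^ k = x k}"

definition madic_one :: "nat \<Rightarrow> nat \<Rightarrow> int" where
  "madic_one m = (\<lambda>k. 1 mod int m ^ k)"

definition madic_mult :: "nat \<Rightarrow> (nat \<Rightarrow> int) \<Rightarrow> (nat \<Rightarrow> int) \<Rightarrow> nat \<Rightarrow> int" where
  "madic_mult m x y = (\<lambda>k. (x k * y k) mod int m ^ k)"

text \<open>For p in Z_m and r = p mod m (an integer in 0..m-1), the unique s in Z_m with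
  p = m s + r has residues s mod m^k = ((p - r) mod m^(k+1)) div m.\<close>

definition madic_divm :: "nat \<Rightarrow> (nat \<Rightarrow> int) \<Rightarrow> int \<Rightarrow> nat \<Rightarrow> int" where
  "madic_divm m p r = (\<lambda>k. ((p (Suc k) - r) mod int m ^ Suc k) div int m)"

text \<open>(r_i(xi), s_i(xi)): r_0 = 0, s_0 = 1, and xi s_{i-1} = m s_i + r_i with 0 \<le> r_i < m.\<close>

fun rs :: "nat \<Rightarrow> (nat \<Rightarrow> int) \<Rightarrow> nat \<Rightarrow> int \<times> (nat \<Rightarrow> int)" where
  "rs m xi 0 = (0, madic_one m)"
| "rs m xi (Suc i) =
     (let p = madic_mult m xi (snd (rs m xi i)); r = p 1
      in (r, madic_divm m p r))"

definition r_fun :: "nat \<Rightarrow> (nat \<Rightarrow> int) \<Rightarrow> nat \<Rightarrow> int" where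
  "r_fun m xi i = fst (rs m xi i)"

datatype gen = GA | GE nat   \<comment> \<open>the stable letter a and the generators e_0, e_1, ...\<close>

type_synonym letter = "gen \<times> bool"   \<comment> \<open>True: the generator, False: its inverse\<close>
type_synonym word = "letter list"

definition inv_word :: "word \<Rightarrow> word" where
  "inv_word w = rev (map (\<lambda>(g, b). (g, \<not> b)) w)"

definition epow :: "nat \<Rightarrow> int \<Rightarrow> word" where
  "epow i k = replicate (nat \<bar>k\<bar>) (GE i, k \<ge> 0)"

text \<open>Relators: E is free abelian on e_0, e_1, ... (commutators), and the HNN relations
  a x a^-1 = phi(x) for x running over the basis m e_0, e_i - r_i(xi) e_0 (i \<ge> 1) of E_{m,xi}.\<close>

inductive relator :: "nat \<Rightarrow> (nat \<Rightarrow> int) \<Rightarrow> word \<Rightarrow> bool" for m xi where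
  comm: "relator m xi [(GE i, True), (GE j, True), (GE i, False), (GE j, False)]"
| hnn0: "relator m xi ([(GA, True)] @ epow 0 (int m) @ [(GA, False)] @ [(GE 1, False)])"
| hnn: "i \<ge> 1 \<Longrightarrow> relator m xi
          ([(GA, True)] @ [(GE i, True)] @ epow 0 (- r_fun m xi i) @ [(GA, False)] @ [(GE (Suc i), False)])"

inductive geq :: "nat \<Rightarrow> (nat \<Rightarrow> int) \<Rightarrow> word \<Rightarrow> word \<Rightarrow> bool" for m xi where
  refl: "geq m xi u u"
| sym: "geq m xi u v \<Longrightarrow> geq m xi v u"
| trans: "geq m xi u v \<Longrightarrow> geq m xi v w \<Longrightarrow> geq m xi u w"
| ctxt: "geq m xi u v \<Longrightarrow> geq m xi (x @ u @ y) (x @ v @ y)"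
| cancel: "geq m xi [(g, b), (g, \<not> b)] []"
| rel: "relator m xi r \<Longrightarrow> geq m xi r []"

definition in_E :: "nat \<Rightarrow> (nat \<Rightarrow> int) \<Rightarrow> word \<Rightarrow> bool" where
  "in_E m xi w \<longleftrightarrow> (\<exists>v. (\<forall>l \<in> set v. fst l \<noteq> GA) \<and> geq m xi w v)"

definition wword :: "nat \<Rightarrow> int \<Rightarrow> (nat \<Rightarrow> int) \<Rightarrow> word" where
  "wword n c u = replicate (Suc n) (GA, True) @ epow 0 c
     @ concat (map (\<lambda>i. [(GA, False)] @ epow 0 (- u i)) [1..<Suc n]) @ [(GA, False)]"

end

theory Submission
  imports Defs "HOL-Library.Poly_Mapping"
begin


definition lin :: "(nat \<Rightarrow> int) \<Rightarrow> (nat \<Rightarrow>\<^sub>0 int) \<Rightarrow> int" where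
  "lin c x = (\<Sum>i\<in>Poly_Mapping.keys x. Poly_Mapping.lookup x i * c i)"

lemma lin_sum: "finite S \<Longrightarrow> Poly_Mapping.keys x \<subseteq> S \<Longrightarrow> lin c x = (\<Sum>i\<in>S. Poly_Mapping.lookup x i * c i)"
  unfolding lin_def by (rule sum.mono_neutral_left) (auto simp: in_keys_iff)

lemma keys_bound: "\<exists>N. Poly_Mapping.keys (x::nat \<Rightarrow>\<^sub>0 int) \<subseteq> {..<N}"
  using finite_nat_set_iff_bounded[of "Poly_Mapping.keys x"] finite_keys by (auto simp: subset_eq)

lemma lin_add: "lin c (x + y) = lin c x + lin c y"
proof -
  have f: "finite (Poly_Mapping.keys x \<union> Poly_Mapping.keys y)" by simp
  have "lin c (x + y) = (\<Sum>i\<in>Poly_Mapping.keys x \<union> Poly_Mapping.keys y. Poly_Mapping.lookup (x+y) i * c i)"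
    by (rule lin_sum[OF f]) (rule keys_add)
  also have "\<dots> = (\<Sum>i\<in>Poly_Mapping.keys x \<union> Poly_Mapping.keys y. Poly_Mapping.lookup x i * c i) + (\<Sum>i\<in>Poly_Mapping.keys x \<union> Poly_Mapping.keys y. Poly_Mapping.lookup y i * c i)"
    by (simp add: lookup_add distrib_right sum.distrib)
  also have "\<dots> = lin c x + lin c y"
    by (simp add: lin_sum[OF f])
  finally show ?thesis .
qed

lemma lin_zero[simp]: "lin c 0 = 0" by (simp add: lin_def)

lemma lin_single[simp]: "lin c (Poly_Mapping.single k v) = v * c k"
  by (simp add: lin_def)

lemma lin_uminus: "lin c (- x) = - lin c x"
  using lin_add[of c x "-x"] by simp

lift_definition shd :: "(nat \<Rightarrow>\<^sub>0 int) \<Rightarrow> (nat \<Rightarrow>\<^sub>0 int)" is "\<lambda>x i. if i = 0 then 0 else x (Suc i)"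
proof -
  fix f :: "nat \<Rightarrow> int" assume "finite {x. f x \<noteq> 0}"
  then have "finite ((\<lambda>j. j - 1) ` {j. f j \<noteq> 0})" by simp
  moreover have "{i. (if i = 0 then 0 else f (Suc i)) \<noteq> 0} \<subseteq> (\<lambda>j. j - 1) ` {j. f j \<noteq> 0}"
  proof (intro subsetI)
    fix i assume "i \<in> {i. (if i = 0 then 0 else f (Suc i)) \<noteq> 0}"
    then have "i = Suc i - 1 \<and> Suc i \<in> {j. f j \<noteq> 0}" by (auto split: if_splits)
    then show "i \<in> (\<lambda>j. j - 1) ` {j. f j \<noteq> 0}" by blast
  qed
  ultimately show "finite {i. (if i = 0 then 0 else f (Suc i)) \<noteq> 0}" by (rule finite_subset[rotated])
qed

lift_definition shu :: "(nat \<Rightarrow>\<^sub>0 int) \<Rightarrow> (nat \<Rightarrow>\<^sub>0 int)" is "\<lambda>x i. if i \<le> 1 then 0 else x (i - 1)"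
proof -
  fix f :: "nat \<Rightarrow> int" assume "finite {x. f x \<noteq> 0}"
  then have "finite (Suc ` {j. f j \<noteq> 0})" by simp
  moreover have "{i. (if i \<le> 1 then 0 else f (i - 1)) \<noteq> 0} \<subseteq> Suc ` {j. f j \<noteq> 0}"
  proof (intro subsetI)
    fix i assume "i \<in> {i. (if i \<le> 1 then 0 else f (i - 1)) \<noteq> 0}"
    then have "i = Suc (i - 1) \<and> i - 1 \<in> {j. f j \<noteq> 0}" by (auto split: if_splits)
    then show "i \<in> Suc ` {j. f j \<noteq> 0}" by blast
  qed
  ultimately show "finite {i. (if i \<le> 1 then 0 else f (i - 1)) \<noteq> 0}" by (rule finite_subset[rotated])
qed

lemma lookup_shd[simp]: "Poly_Mapping.lookup (shd x) i = (if i = 0 then 0 else Poly_Mapping.lookup x (Suc i))"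
  by (simp add: shd.rep_eq)
lemma lookup_shu[simp]: "Poly_Mapping.lookup (shu x) i = (if i \<le> 1 then 0 else Poly_Mapping.lookup x (i - 1))"
  by (simp add: shu.rep_eq)

lemma shd_add: "shd (x + y) = shd x + shd y"
  by (rule poly_mapping_eqI) (simp add: lookup_add)
lemma shu_add: "shu (x + y) = shu x + shu y"
  by (rule poly_mapping_eqI) (simp add: lookup_add)

lemma lin_shu: "lin c (shu x) = lin (\<lambda>i. if i = 0 then 0 else c (Suc i)) x"
proof -
  obtain N where N: "Poly_Mapping.keys x \<subseteq> {..<N}" using keys_bound by blast
  have N2: "Poly_Mapping.keys (shu x) \<subseteq> {..<Suc N}"
    using N by (auto simp: in_keys_iff split: if_splits)
  have "lin c (shu x) = (\<Sum>i<Suc N. Poly_Mapping.lookup (shu x) i * c i)" by (rule lin_sum[OF _ N2]) simp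
  also have "\<dots> = (\<Sum>i<N. Poly_Mapping.lookup x i * (if i = 0 then 0 else c (Suc i)))"
    unfolding sum.lessThan_Suc_shift by (auto intro!: sum.cong)
  also have "\<dots> = lin (\<lambda>i. if i = 0 then 0 else c (Suc i)) x" by (rule lin_sum[symmetric, OF _ N]) simp
  finally show ?thesis .
qed

lemma lin_shd: "lin c (shd x) = lin (\<lambda>i. if i \<le> 1 then 0 else c (i - 1)) x"
proof -
  obtain N0 where N0: "Poly_Mapping.keys x \<subseteq> {..<N0}" using keys_bound by blast
  define N where "N = N0"
  have N: "Poly_Mapping.keys x \<subseteq> {..<Suc N}" using N0 unfolding N_def by auto
  have N2: "Poly_Mapping.keys (shd x) \<subseteq> {..<Suc N}"
  proof
    fix i assume "i \<in> Poly_Mapping.keys (shd x)"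
    then have "Suc i \<in> Poly_Mapping.keys x" by (simp add: in_keys_iff split: if_splits)
    with N show "i \<in> {..<Suc N}" by auto
  qed
  have N3: "Poly_Mapping.keys x \<subseteq> {..<Suc (Suc N)}" using N by auto
  have "lin c (shd x) = (\<Sum>i<Suc N. Poly_Mapping.lookup (shd x) i * c i)" by (rule lin_sum[OF _ N2]) simp
  also have "\<dots> = (\<Sum>i<N. Poly_Mapping.lookup x (Suc (Suc i)) * c (Suc i))"
    unfolding sum.lessThan_Suc_shift by (auto intro!: sum.cong)
  also have "\<dots> = (\<Sum>i<Suc (Suc N). Poly_Mapping.lookup x i * (if i \<le> 1 then 0 else c (i - 1)))"
    unfolding sum.lessThan_Suc_shift by (auto intro!: sum.cong)
  also have "\<dots> = lin (\<lambda>i. if i \<le> 1 then 0 else c (i - 1)) x" by (rule lin_sum[symmetric, OF _ N3]) simp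
  finally show ?thesis .
qed



abbreviation lk :: "(nat \<Rightarrow>\<^sub>0 int) \<Rightarrow> nat \<Rightarrow> int" where "lk \<equiv> Poly_Mapping.lookup"
abbreviation sg :: "nat \<Rightarrow> int \<Rightarrow> (nat \<Rightarrow>\<^sub>0 int)" where "sg \<equiv> Poly_Mapping.single"

lemma lk_sg: "lk (sg k v) i = (if k = i then v else 0)"
  by (simp add: lookup_single when_def)

lemma lin_cong: "(\<And>i. c i = d i) \<Longrightarrow> lin c x = lin d x"
  by (simp add: lin_def)

lemma lin_cadd: "lin (\<lambda>i. c i + d i) x = lin c x + lin d x"
  by (simp add: lin_def distrib_left sum.distrib)

lemma lin_delta0: "lin (\<lambda>i. if i = 0 then 1 else 0) x = lk x 0"
proof -
  have "lin (\<lambda>i. if i = 0 then 1 else 0) x = (\<Sum>i\<in>Poly_Mapping.keys x. if i = 0 then lk x i else 0)"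
    unfolding lin_def by (rule sum.cong) auto
  also have "\<dots> = lk x 0" by (simp add: sum.delta' in_keys_iff)
  finally show ?thesis .
qed

locale bsl = fixes m :: int and R :: "nat \<Rightarrow> int" assumes mpos: "m > 0"
begin

definition c0 :: "nat \<Rightarrow> int" where "c0 i = (if i = 0 then 1 else R i)"
definition c1 :: "nat \<Rightarrow> int" where "c1 i = (if i = 0 then 0 else R i)"
definition c2 :: "nat \<Rightarrow> int" where "c2 i = (if i \<le> 1 then 0 else R (i - 1))"
definition L where "L x = lin c0 x"
definition down where "down x = sg 0 (m * lk x 1 - lin c2 x) + shd x"
definition up where "up x q = sg 1 q + shu x"
definition phi where "phi x = up x (L x div m)"

lemma lk_down: "lk (down x) i = (if i = 0 then m * lk x 1 - lin c2 x else lk x (Suc i))"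
  by (simp add: down_def lookup_add lk_sg)

lemma lk_up: "lk (up x q) i = (if i = 1 then q else if i = 0 then 0 else lk x (i - 1))"
  by (simp add: up_def lookup_add lk_sg)

lemma L_add: "L (x + y) = L x + L y" by (simp add: L_def lin_add)

lemma down_add: "down (x + y) = down x + down y"
  by (rule poly_mapping_eqI) (simp add: lk_down lookup_add lin_add algebra_simps)

lemma up_add: "up (x + y) (a + b) = up x a + up y b"
  by (rule poly_mapping_eqI) (simp add: lk_up lookup_add)

lemma down_zero[simp]: "down 0 = 0"
  by (rule poly_mapping_eqI) (simp add: lk_down)

lemma up_zero[simp]: "up 0 0 = 0"
  by (rule poly_mapping_eqI) (simp add: lk_up)

lemma L_zero[simp]: "L 0 = 0" by (simp add: L_def)

lemma L_sg: "L (sg k v) = v * c0 k" by (simp add: L_def)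

lemma L_down: "L (down x) = m * lk x 1"
proof -
  have "L (down x) = (m * lk x 1 - lin c2 x) + lin c0 (shd x)"
    by (simp add: L_def down_def lin_add c0_def)
  also have "lin c0 (shd x) = lin c2 x"
    by (simp add: lin_shd) (rule lin_cong, auto simp: c0_def c2_def)
  finally show ?thesis by simp
qed

lemma down_phi: assumes "L x mod m = 0" shows "down (phi x) = x"
proof (rule poly_mapping_eqI)
  fix i
  show "lk (down (phi x)) i = lk x i"
  proof (cases "i = 0")
    case True
    have e1: "m * (L x div m) = L x" using assms by (metis mult_div_mod_eq add_0_right)
    have e2: "lin c2 (up x (L x div m)) = lin c1 x"
      by (simp add: up_def lin_add lin_shu c2_def) (rule lin_cong, simp add: c2_def c1_def)
    have e3: "lin c0 x = lin c1 x + lk x 0"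
    proof -
      have "lin c0 x = lin (\<lambda>i. c1 i + (if i = 0 then 1 else 0)) x"
        by (rule lin_cong) (simp add: c0_def c1_def)
      then show ?thesis by (simp add: lin_cadd lin_delta0)
    qed
    show ?thesis using True e1 e2 e3
      by (simp add: lk_down phi_def lk_up L_def)
  next
    case False
    then show ?thesis by (simp add: lk_down phi_def lk_up)
  qed
qed

fun act :: "(nat \<Rightarrow>\<^sub>0 int) \<Rightarrow> (int \<times> bool) list \<Rightarrow> (int \<times> bool) list" where
  "act x [] = []"
| "act x ((c, True) # l) = (c + lk x 0, True) # act (down x) l"
| "act x ((c, False) # l) = ((L x + c) mod m, False) # act (up x ((L x + c) div m)) l"

lemma act_add: "act x (act y l) = act (x + y) l"
proof (induction l arbitrary: x y)
  case Nil
  then show ?case by simp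
next
  case (Cons p l)
  obtain c b where p: "p = (c, b)" by force
  show ?case
  proof (cases b)
    case True
    then show ?thesis using Cons p by (simp add: down_add lookup_add algebra_simps)
  next
    case False
    define q1 where "q1 = (L y + c) div m"
    define c1 where "c1 = (L y + c) mod m"
    have e: "L (x + y) + c = (L x + c1) + q1 * m"
      unfolding q1_def c1_def L_add by (metis add.assoc div_mult_mod_eq add.commute)
    have m0: "m \<noteq> 0" using mpos by simp
    have d: "(L (x + y) + c) div m = q1 + (L x + c1) div m"
      unfolding e using m0 by simp
    have md: "(L (x + y) + c) mod m = (L x + c1) mod m"
      unfolding e by simp
    have "up x ((L x + c1) div m) + up y q1 = up (x + y) ((L (x + y) + c) div m)"
      unfolding d using up_add[of x y "(L x + c1) div m" q1] by (simp add: ac_simps)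
    then show ?thesis using Cons p False
      by (simp add: q1_def[symmetric] c1_def[symmetric] md)
  qed
qed

definition vr :: "int \<times> bool \<Rightarrow> bool" where "vr p = (snd p \<or> (0 \<le> fst p \<and> fst p < m))"

definition vl :: "(int \<times> bool) list \<Rightarrow> bool" where "vl l = (\<forall>p\<in>set l. vr p)"

lemma act_zero: "vl l \<Longrightarrow> act 0 l = l"
proof (induction l)
  case Nil
  then show ?case by simp
next
  case (Cons p l)
  obtain c b where p: "p = (c, b)" by force
  have vl: "vl l" and vp: "vr p" using Cons.prems by (auto simp: vl_def)
  show ?case
  proof (cases b)
    case True
    then show ?thesis using Cons.IH[OF vl] p by simp
  next
    case False
    then have "0 \<le> c" "c < m" using vp p by (auto simp: vr_def)
    then have "c mod m = c" "c div m = 0" by simp_all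
    then show ?thesis using Cons.IH[OF vl] p False by simp
  qed
qed

lemma act_length: "length (act x l) = length l"
  by (induction x l rule: act.induct) auto

lemma act_Nil[simp]: "act x l = [] \<longleftrightarrow> l = []"
  by (metis act_length length_0_conv)

lemma act_vl: "vl (act x l)"
proof (induction x l rule: act.induct)
  case (3 x c l)
  then show ?case using mpos by (auto simp: vl_def vr_def)
qed (auto simp: vl_def vr_def)

fun red :: "(int \<times> bool) list \<Rightarrow> bool" where
  "red [] = True"
| "red [p] = vr p"
| "red (p # q # l) = (vr p \<and> \<not> (fst q = 0 \<and> snd q = (\<not> snd p)) \<and> red (q # l))"

lemma red_cons: "red (p # l) \<longleftrightarrow> vr p \<and> (l = [] \<or> \<not> (fst (hd l) = 0 \<and> snd (hd l) = (\<not> snd p))) \<and> red l"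
  by (cases l) auto

lemma red_vl: "red l \<Longrightarrow> vl l"
  by (induction l rule: red.induct) (auto simp: vl_def)

lemma act_hd_True: "act x ((c, True) # l) = (c', b') # l' \<Longrightarrow> b'"
  by simp
lemma act_cons: "\<exists>c' l'. act x ((c, b) # l) = (c', b) # l'"
  by (cases b) auto

lemma red_act: "red l \<Longrightarrow> red (act x l)"
proof (induction l arbitrary: x)
  case Nil
  then show ?case by simp
next
  case (Cons p r)
  obtain c b where p: "p = (c, b)" by force
  have rr: "red r" and vp: "vr p" and pin: "r = [] \<or> \<not> (fst (hd r) = 0 \<and> snd (hd r) = (\<not> b))"
    using Cons.prems p by (auto simp: red_cons)
  show ?case
  proof (cases b)
    case True
    have h: "act x (p # r) = (c + lk x 0, True) # act (down x) r" using p True by simp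
    show ?thesis
    proof (cases r)
      case Nil
      then show ?thesis using h by (simp add: vr_def)
    next
      case (Cons q r2)
      obtain c2 b2 where q: "q = (c2, b2)" by force
      show ?thesis
      proof (cases b2)
        case True
        then show ?thesis using h Cons q Cons.IH[OF rr, of "down x"] by (simp add: vr_def)
      next
        case False
        have vq: "0 \<le> c2" "c2 < m" using rr Cons q False by (auto simp: red_cons vr_def)
        have "(L (down x) + c2) mod m = c2" using vq by (simp add: L_down)
        moreover have "c2 \<noteq> 0" using pin Cons q False True by auto
        ultimately show ?thesis using h Cons q False Cons.IH[OF rr, of "down x"]
          by (simp add: vr_def)
      qed
    qed
  next
    case False
    define y where "y = up x ((L x + c) div m)"
    have h: "act x (p # r) = ((L x + c) mod m, False) # act y r" using p False y_def by simp
    have vh: "vr ((L x + c) mod m, False)" using mpos by (simp add: vr_def)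
    show ?thesis
    proof (cases r)
      case Nil
      then show ?thesis using h vh by simp
    next
      case (Cons q r2)
      obtain c2 b2 where q: "q = (c2, b2)" by force
      show ?thesis
      proof (cases b2)
        case False
        then show ?thesis using h vh Cons q Cons.IH[OF rr, of y] by (simp add: vr_def)
      next
        case True
        have "lk y 0 = 0" by (simp add: y_def lk_up)
        moreover have "c2 \<noteq> 0" using pin Cons q False True by auto
        ultimately show ?thesis using h vh Cons q True Cons.IH[OF rr, of y]
          by simp
      qed
    qed
  qed
qed

definition A :: "(int \<times> bool) list \<Rightarrow> (int \<times> bool) list" where
  "A l = (if l \<noteq> [] \<and> hd l = (0, False) then tl l else (0, True) # l)"
definition Ainv :: "(int \<times> bool) list \<Rightarrow> (int \<times> bool) list" where
  "Ainv l = (if l \<noteq> [] \<and> hd l = (0, True) then tl l else (0, False) # l)"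

lemma red_A: "red l \<Longrightarrow> red (A l)"
  unfolding A_def by (cases l) (auto simp: red_cons vr_def)

lemma red_Ainv: "red l \<Longrightarrow> red (Ainv l)"
  unfolding Ainv_def using mpos by (cases l) (auto simp: red_cons vr_def)

lemma Ainv_A: "red l \<Longrightarrow> Ainv (A l) = l"
  unfolding A_def Ainv_def by (cases l) (auto simp: red_cons)

lemma A_Ainv: "red l \<Longrightarrow> A (Ainv l) = l"
  unfolding A_def Ainv_def by (cases l) (auto simp: red_cons)

end


context bsl begin

definition lt :: "letter \<Rightarrow> (int \<times> bool) list \<Rightarrow> (int \<times> bool) list" where
  "lt x = (case x of (GA, b) \<Rightarrow> if b then A else Ainv | (GE i, b) \<Rightarrow> act (sg i (if b then 1 else -1)))"

definition W :: "word \<Rightarrow> (int \<times> bool) list \<Rightarrow> (int \<times> bool) list" where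
  "W w l = foldr lt w l"

lemma W_Nil[simp]: "W [] l = l" by (simp add: W_def)
lemma W_Cons[simp]: "W (x # w) l = lt x (W w l)" by (simp add: W_def)
lemma W_append[simp]: "W (u @ v) l = W u (W v l)" by (simp add: W_def)

lemma lt_simps[simp]:
  "lt (GA, True) = A" "lt (GA, False) = Ainv"
  "lt (GE i, True) = act (sg i 1)" "lt (GE i, False) = act (sg i (-1))"
  by (simp_all add: lt_def)

lemma red_lt: "red l \<Longrightarrow> red (lt x l)"
  unfolding lt_def by (auto split: gen.splits prod.splits intro: red_A red_Ainv red_act)

lemma red_W: "red l \<Longrightarrow> red (W w l)"
  by (induction w) (auto intro: red_lt)

lemma lt_cancel: "red l \<Longrightarrow> lt (g, b) (lt (g, \<not> b) l) = l"
proof (cases g)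
  case GA
  assume "red l"
  then show ?thesis using GA by (cases b) (auto simp: Ainv_A A_Ainv)
next
  case (GE i)
  assume r: "red l"
  have z: "sg i 1 + sg i (-1) = 0" "sg i (-1) + sg i 1 = 0" by (simp_all add: single_uminus)
  show ?thesis using GE act_zero[OF red_vl[OF r]] z by (cases b) (auto simp: act_add)
qed

lemma W_rep: "vl l \<Longrightarrow> W (replicate n (GE i, b)) l = act (sg i (if b then int n else - int n)) l"
proof (induction n)
  case 0
  then show ?case by (simp add: act_zero)
next
  case (Suc n)
  then show ?case
    by (cases b) (simp_all add: act_add single_add[symmetric] algebra_simps)
qed

lemma W_epow: "vl l \<Longrightarrow> W (epow i k) l = act (sg i k) l"
  unfolding epow_def by (simp add: W_rep)

lemma hnn_core: assumes "red l" "L x mod m = 0" shows "A (act x (Ainv l)) = act (phi x) l"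
proof (cases "l \<noteq> [] \<and> hd l = (0, True)")
  case True
  then obtain r where l: "l = (0, True) # r" by (cases l) auto
  have rr: "red r" and pin: "r = [] \<or> \<not> (fst (hd r) = 0 \<and> snd (hd r) = False)"
    using assms(1) l by (auto simp: red_cons)
  have ai: "Ainv l = r" using l by (simp add: Ainv_def)
  have nz: "\<not> (act x r \<noteq> [] \<and> hd (act x r) = (0, False))"
  proof (cases r)
    case (Cons q r2)
    obtain c2 b2 where q: "q = (c2, b2)" by force
    show ?thesis
    proof (cases b2)
      case False
      have "0 \<le> c2" "c2 < m" using rr Cons q False by (auto simp: red_cons vr_def)
      moreover have "c2 \<noteq> 0" using pin Cons q False by auto
      moreover have "(L x + c2) mod m = c2 mod m" using assms(2) by (metis mod_add_left_eq add_0)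
      ultimately show ?thesis using Cons q False by simp
    qed (use Cons q in simp)
  qed simp
  have "A (act x (Ainv l)) = (0, True) # act x r" using nz ai unfolding A_def by auto
  moreover have "act (phi x) l = (0, True) # act x r"
    using l down_phi[OF assms(2)] by (simp add: phi_def lk_up)
  ultimately show ?thesis by simp
next
  case False
  then have ai: "Ainv l = (0, False) # l" unfolding Ainv_def by auto
  have "act x ((0, False) # l) = (0, False) # act (phi x) l"
    using assms(2) by (simp add: phi_def)
  then show ?thesis using ai unfolding A_def by auto
qed

lemma relator_W: assumes "relator M xi w" "m = int M" "R = r_fun M xi" "red l" shows "W w l = l"
  using assms(1)
proof cases
  case (comm i j)
  have vl: "vl l" using red_vl[OF assms(4)] .
  have "sg i 1 + (sg j 1 + (sg i (-1) + sg j (-1))) = 0"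
    by (simp add: single_uminus algebra_simps)
  then show ?thesis using comm act_zero[OF vl] by (simp add: act_add)
next
  case hnn0
  define l1 where "l1 = act (sg 1 (-1)) l"
  have r1: "red l1" using red_act[OF assms(4)] l1_def by simp
  have r2: "red (Ainv l1)" using red_Ainv[OF r1] .
  have Lm: "L (sg 0 m) mod m = 0" by (simp add: L_sg c0_def)
  have ph: "phi (sg 0 m) = sg 1 1"
    using mpos by (intro poly_mapping_eqI) (simp add: phi_def L_sg c0_def lk_up lk_sg)
  have w: "w = [(GA, True)] @ epow 0 m @ [(GA, False), (GE 1, False)]" using hnn0 assms(2) by simp
  have "W w l = A (W (epow 0 m) (Ainv l1))" unfolding w l1_def by simp
  also have "\<dots> = A (act (sg 0 m) (Ainv l1))" using W_epow[OF red_vl[OF r2]] by simp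
  also have "\<dots> = act (sg 1 1) l1" using hnn_core[OF r1 Lm] ph by simp
  also have "\<dots> = l" unfolding l1_def act_add
    using act_zero[OF red_vl[OF assms(4)]] by (simp add: single_uminus)
  finally show ?thesis .
next
  case (hnn i)
  define l1 where "l1 = act (sg (Suc i) (-1)) l"
  define x where "x = sg i 1 + sg 0 (- R i)"
  have r1: "red l1" using red_act[OF assms(4)] l1_def by simp
  have r2: "red (Ainv l1)" using red_Ainv[OF r1] .
  have Lx: "L x = 0" using hnn(2) by (simp add: x_def L_add L_sg c0_def)
  then have Lm: "L x mod m = 0" by simp
  have ph: "phi x = sg (Suc i) 1"
    using hnn(2) Lx by (intro poly_mapping_eqI) (auto simp: phi_def x_def lk_up lk_sg lookup_add)
  have w: "w = [(GA, True), (GE i, True)] @ epow 0 (- R i) @ [(GA, False), (GE (Suc i), False)]"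
    using hnn assms(3) by simp
  have "W w l = A (act (sg i 1) (W (epow 0 (- R i)) (Ainv l1)))" unfolding w l1_def by simp
  also have "\<dots> = A (act (sg i 1) (act (sg 0 (- R i)) (Ainv l1)))"
    using W_epow[OF red_vl[OF r2]] by simp
  also have "\<dots> = A (act x (Ainv l1))" by (simp add: act_add x_def)
  also have "\<dots> = act (sg (Suc i) 1) l1" using hnn_core[OF r1 Lm] ph by simp
  also have "\<dots> = l" unfolding l1_def act_add
    using act_zero[OF red_vl[OF assms(4)]] by (simp add: single_uminus)
  finally show ?thesis .
qed

lemma geq_W: assumes "geq M xi u v" "m = int M" "R = r_fun M xi" "red l" shows "W u l = W v l"
  using assms(1,4)
proof (induction arbitrary: l rule: geq.induct)
  case (ctxt u v x y)
  then show ?case using red_W by simp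
next
  case (cancel g b)
  then show ?case using lt_cancel[of l g b] by simp
next
  case (rel r)
  then show ?case using relator_W[OF rel.hyps assms(2) assms(3) rel.prems] by simp
qed auto

end


lemma g_app: "geq M xi u u' \<Longrightarrow> geq M xi v v' \<Longrightarrow> geq M xi (u @ v) (u' @ v')"
proof -
  assume a: "geq M xi u u'" and b: "geq M xi v v'"
  have "geq M xi ([] @ u @ v) ([] @ u' @ v)" by (rule geq.ctxt[OF a])
  moreover have "geq M xi (u' @ v @ []) (u' @ v' @ [])" by (rule geq.ctxt[OF b])
  ultimately show ?thesis by (auto intro: geq.trans)
qed

lemma g_refl: "geq M xi u u" by (rule geq.refl)

lemma g_cancel: "geq M xi (x @ [(g, b), (g, \<not> b)] @ y) (x @ y)"
  using geq.ctxt[OF geq.cancel[of M xi g b], of x y] by simp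

lemma g_cancel': "geq M xi (x @ [(g, \<not> b), (g, b)] @ y) (x @ y)"
  using g_cancel[of M xi x g "\<not> b" y] by simp

lemma inv_word_Cons: "inv_word (x # u) = inv_word u @ [(fst x, \<not> snd x)]"
  by (simp add: inv_word_def split: prod.splits)

lemma inv_cancel: "geq M xi (inv_word u @ u) []"
proof (induction u)
  case Nil
  then show ?case by (simp add: inv_word_def geq.refl)
next
  case (Cons x u)
  obtain g b where x: "x = (g, b)" by force
  have "geq M xi (inv_word u @ [(g, \<not> b), (g, b)] @ u) (inv_word u @ u)" by (rule g_cancel')
  then show ?case using Cons x by (auto simp: inv_word_Cons intro: geq.trans)
qed

lemma rel_inv: "geq M xi r [] \<Longrightarrow> geq M xi (inv_word r) []"
proof -
  assume a: "geq M xi r []"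
  have "geq M xi (inv_word r @ r @ []) (inv_word r @ [] @ [])" by (rule geq.ctxt[OF a])
  then have "geq M xi (inv_word r @ r) (inv_word r)" by simp
  then show ?thesis using inv_cancel[of M xi r] by (meson geq.sym geq.trans)
qed

lemma inv_word_Nil: "inv_word [] = []" by (simp add: inv_word_def)

lemma inv_word_append: "inv_word (u @ v) = inv_word v @ inv_word u"
  by (simp add: inv_word_def)

lemma inv_word_epow: "inv_word (epow i k) = epow i (- k)"
  by (cases "k = 0") (auto simp: inv_word_def epow_def)

lemma solve_left: "geq M xi ([(g, b)] @ u) [] \<Longrightarrow> geq M xi u [(g, \<not> b)]"
proof -
  assume a: "geq M xi ([(g, b)] @ u) []"
  have "geq M xi ([(g, \<not> b)] @ ([(g, b)] @ u) @ []) ([(g, \<not> b)] @ [] @ [])" by (rule geq.ctxt[OF a])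
  then have 1: "geq M xi ([] @ [(g, \<not> b), (g, b)] @ u) [(g, \<not> b)]" by simp
  have 2: "geq M xi ([] @ [(g, \<not> b), (g, b)] @ u) ([] @ u)" by (rule g_cancel')
  show ?thesis using 1 2 by simp (meson geq.sym geq.trans)
qed

lemma solve_right: "geq M xi (u @ [(g, b)]) [] \<Longrightarrow> geq M xi u [(g, \<not> b)]"
proof -
  assume a: "geq M xi (u @ [(g, b)]) []"
  have "geq M xi ([] @ (u @ [(g, b)]) @ [(g, \<not> b)]) ([] @ [] @ [(g, \<not> b)])" by (rule geq.ctxt[OF a])
  then have 1: "geq M xi (u @ [(g, b), (g, \<not> b)] @ []) [(g, \<not> b)]" by simp
  have 2: "geq M xi (u @ [(g, b), (g, \<not> b)] @ []) (u @ [])" by (rule g_cancel)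
  show ?thesis using 1 2 by simp (meson geq.sym geq.trans)
qed

lemma comm1: "geq M xi [(GE 0, True), (GE i, False)] [(GE i, False), (GE 0, True)]"
proof -
  have "geq M xi ([(GE i, True), (GE 0, True), (GE i, False)] @ [(GE 0, False)]) []"
    using geq.rel[OF relator.comm[of M xi i 0]] by simp
  then have a: "geq M xi [(GE i, True), (GE 0, True), (GE i, False)] [(GE 0, True)]"
    using solve_right by fastforce
  have "geq M xi ([(GE i, False)] @ [(GE i, True), (GE 0, True), (GE i, False)] @ []) ([(GE i, False)] @ [(GE 0, True)] @ [])"
    by (rule geq.ctxt[OF a])
  then have 1: "geq M xi ([] @ [(GE i, False), (GE i, True)] @ [(GE 0, True), (GE i, False)]) [(GE i, False), (GE 0, True)]"
    by simp
  have 2: "geq M xi ([] @ [(GE i, False), (GE i, True)] @ [(GE 0, True), (GE i, False)]) ([] @ [(GE 0, True), (GE i, False)])"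
    using g_cancel'[of M xi "[]" "GE i" True] by simp
  show ?thesis using 1 2 by simp (meson geq.sym geq.trans)
qed

lemma comm_rep: "geq M xi (replicate n (GE 0, True) @ [(GE i, False)]) ([(GE i, False)] @ replicate n (GE 0, True))"
proof (induction n)
  case 0
  then show ?case by (simp add: geq.refl)
next
  case (Suc n)
  have "geq M xi ([(GE 0, True)] @ (replicate n (GE 0, True) @ [(GE i, False)]) @ [])
                 ([(GE 0, True)] @ ([(GE i, False)] @ replicate n (GE 0, True)) @ [])"
    by (rule geq.ctxt[OF Suc.IH])
  moreover have "geq M xi ([] @ [(GE 0, True), (GE i, False)] @ replicate n (GE 0, True))
                 ([] @ [(GE i, False), (GE 0, True)] @ replicate n (GE 0, True))"
    by (rule geq.ctxt[OF comm1])
  ultimately show ?case by simp (meson geq.trans)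
qed

lemma r_fun_bounds: "M > 0 \<Longrightarrow> i \<ge> 1 \<Longrightarrow> 0 \<le> r_fun M xi i \<and> r_fun M xi i < int M"
  by (cases i) (auto simp: r_fun_def Let_def madic_mult_def)

lemma epow_1: "epow i 1 = [(GE i, True)]" by (simp add: epow_def)
lemma epow_m1: "epow i (-1) = [(GE i, False)]" by (simp add: epow_def)

lemma key1: assumes "s = 1 \<or> s = -1"
  shows "geq M xi ([(GA, True)] @ epow 0 (s * int M) @ [(GA, False)]) (epow 1 s)"
proof -
  define R0 where "R0 = [(GA, True)] @ epow 0 (int M) @ [(GA, False)] @ [(GE 1, False)]"
  have r0: "geq M xi R0 []" unfolding R0_def by (rule geq.rel[OF relator.hnn0])
  show ?thesis
  proof (cases "s = 1")
    case True
    have "geq M xi (([(GA, True)] @ epow 0 (int M) @ [(GA, False)]) @ [(GE 1, False)]) []"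
      using r0 unfolding R0_def by simp
    then show ?thesis using solve_right True by (fastforce simp: epow_1)
  next
    case False
    then have s: "s = -1" using assms by simp
    have "geq M xi (inv_word R0) []" by (rule rel_inv[OF r0])
    then have "geq M xi ([(GE 1, True)] @ ([(GA, True)] @ epow 0 (- int M) @ [(GA, False)])) []"
      unfolding R0_def by (simp add: inv_word_append inv_word_epow inv_word_Cons inv_word_Nil)
    then show ?thesis using solve_left s by (fastforce simp: epow_m1)
  qed
qed

lemma key2: assumes "s = 1 \<or> s = -1" "j \<ge> 1" "M > 0"
  shows "geq M xi ([(GA, True)] @ epow j s @ epow 0 (- s * r_fun M xi j) @ [(GA, False)]) (epow (Suc j) s)"
proof -
  define r where "r = r_fun M xi j"
  define R0 where "R0 = [(GA, True)] @ [(GE j, True)] @ epow 0 (- r) @ [(GA, False)] @ [(GE (Suc j), False)]"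
  have r0: "geq M xi R0 []" unfolding R0_def r_def by (rule geq.rel[OF relator.hnn[OF assms(2)]])
  show ?thesis
  proof (cases "s = 1")
    case True
    have "geq M xi (([(GA, True)] @ [(GE j, True)] @ epow 0 (- r) @ [(GA, False)]) @ [(GE (Suc j), False)]) []"
      using r0 unfolding R0_def by simp
    then show ?thesis using solve_right True by (fastforce simp: epow_1 r_def)
  next
    case False
    then have s: "s = -1" using assms by simp
    have rb: "0 \<le> r" using r_fun_bounds[OF assms(3) assms(2)] r_def by simp
    have "geq M xi (inv_word R0) []" by (rule rel_inv[OF r0])
    then have "geq M xi ([(GE (Suc j), True)] @ ([(GA, True)] @ epow 0 r @ [(GE j, False)] @ [(GA, False)])) []"
      unfolding R0_def by (simp add: inv_word_append inv_word_epow inv_word_Cons inv_word_Nil)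
    then have a: "geq M xi ([(GA, True)] @ epow 0 r @ [(GE j, False)] @ [(GA, False)]) [(GE (Suc j), False)]"
      using solve_left by fastforce
    have e: "epow 0 r = replicate (nat r) (GE 0, True)" using rb by (simp add: epow_def)
    have "geq M xi ([(GA, True)] @ ([(GE j, False)] @ epow 0 r) @ [(GA, False)])
                   ([(GA, True)] @ (epow 0 r @ [(GE j, False)]) @ [(GA, False)])"
      unfolding e by (rule geq.ctxt[OF geq.sym[OF comm_rep]])
    then have "geq M xi ([(GA, True)] @ [(GE j, False)] @ epow 0 r @ [(GA, False)]) [(GE (Suc j), False)]"
      using a by simp (meson geq.trans)
    then show ?thesis using s by (simp add: epow_m1 r_def)
  qed
qed



definition Fw :: "nat \<Rightarrow> int \<Rightarrow> (nat \<Rightarrow> int) \<Rightarrow> nat \<Rightarrow> word" where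
  "Fw n s u j = replicate (Suc n - j) (GA, True) @ epow j s
     @ concat (map (\<lambda>i. epow 0 (- u i) @ [(GA, False)]) [j..<Suc n])"

lemma concat_shift: "concat (map (\<lambda>i. [x] @ f i) xs) @ [x] = [x] @ concat (map (\<lambda>i. f i @ [x]) xs)"
  by (induction xs) auto

lemma F_base: assumes "s = 1 \<or> s = -1"
  shows "geq M xi (wword n (s * int M) u) (Fw n s u 1)"
proof -
  have rep: "replicate (Suc n) (GA, True) = replicate n (GA, True) @ [(GA, True)]"
    by (simp add: replicate_append_same)
  have e: "wword n (s * int M) u = replicate n (GA, True) @ ([(GA, True)] @ epow 0 (s * int M) @ [(GA, False)])
      @ concat (map (\<lambda>i. epow 0 (- u i) @ [(GA, False)]) [1..<Suc n])"
    unfolding wword_def rep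
    using concat_shift[of "(GA, False)" "\<lambda>i. epow 0 (- u i)" "[1..<Suc n]"] by simp
  show ?thesis unfolding e Fw_def
    using geq.ctxt[OF key1[OF assms, of M xi], of "replicate n (GA, True)"
        "concat (map (\<lambda>i. epow 0 (- u i) @ [(GA, False)]) [1..<Suc n])"] by simp
qed

lemma Fw_split: assumes "k \<le> n"
  shows "Fw n s u k = (replicate (Suc n - k) (GA, True) @ epow k s @ epow 0 (- u k) @ [(GA, False)])
      @ concat (map (\<lambda>i. epow 0 (- u i) @ [(GA, False)]) [Suc k..<Suc n])"
proof -
  have "[k..<Suc n] = k # [Suc k..<Suc n]" using assms by (simp add: upt_conv_Cons del: upt_Suc)
  then show ?thesis unfolding Fw_def by (simp del: upt_Suc)
qed

lemma F_step: assumes "s = 1 \<or> s = -1" "1 \<le> j" "j \<le> n" "u j = s * r_fun M xi j" "M > 0"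
  shows "geq M xi (Fw n s u j) (Fw n s u (Suc j))"
proof -
  have rep: "replicate (Suc n - j) (GA, True) = replicate (n - j) (GA, True) @ [(GA, True)]"
    using assms(3) by (simp add: Suc_diff_le replicate_append_same)
  have e: "Fw n s u j = replicate (n - j) (GA, True) @ ([(GA, True)] @ epow j s @ epow 0 (- s * r_fun M xi j) @ [(GA, False)])
      @ concat (map (\<lambda>i. epow 0 (- u i) @ [(GA, False)]) [Suc j..<Suc n])"
    unfolding Fw_split[OF assms(3)] rep assms(4) by (simp del: upt_Suc)
  have e2: "Fw n s u (Suc j) = replicate (n - j) (GA, True) @ epow (Suc j) s
      @ concat (map (\<lambda>i. epow 0 (- u i) @ [(GA, False)]) [Suc j..<Suc n])"
    by (simp add: Fw_def del: upt_Suc)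
  show ?thesis unfolding e e2
    using geq.ctxt[OF key2[OF assms(1,2,5), of xi], of "replicate (n - j) (GA, True)"
        "concat (map (\<lambda>i. epow 0 (- u i) @ [(GA, False)]) [Suc j..<Suc n])"] using assms(3)
    by (simp del: upt_Suc)
qed

lemma F_chain: assumes "s = 1 \<or> s = -1" "M > 0"
  shows "1 \<le> k \<Longrightarrow> k \<le> Suc n \<Longrightarrow> (\<forall>j. 1 \<le> j \<and> j < k \<longrightarrow> u j = s * r_fun M xi j)
    \<Longrightarrow> geq M xi (wword n (s * int M) u) (Fw n s u k)"
proof (induction k)
  case 0
  then show ?case by simp
next
  case (Suc k)
  show ?case
  proof (cases "k = 0")
    case True
    then show ?thesis using F_base[OF assms(1)] by simp
  next
    case False
    have ih: "geq M xi (wword n (s * int M) u) (Fw n s u k)" using Suc False by simp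
    have st: "geq M xi (Fw n s u k) (Fw n s u (Suc k))"
      using F_step[OF assms(1), of k n u M xi] Suc.prems False assms(2) by simp
    show ?thesis using geq.trans[OF ih st] .
  qed
qed

lemma Fw_end: "Fw n s u (Suc n) = epow (Suc n) s" by (simp add: Fw_def)

lemma mod_neq: "(0::int) < m \<Longrightarrow> 0 \<le> a \<Longrightarrow> a < m \<Longrightarrow> 0 \<le> b \<Longrightarrow> b < m \<Longrightarrow> a \<noteq> b \<Longrightarrow> (a - b) mod m \<noteq> 0"
proof
  assume h: "0 < m" "0 \<le> a" "a < m" "0 \<le> b" "b < m" "a \<noteq> b" "(a - b) mod m = 0"
  then have "a mod m = b mod m" by (metis mod_eq_0_iff_dvd mod_eq_dvd_iff)
  then show False using h by simp
qed

context bsl begin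

definition nt :: "(int \<times> bool) list \<Rightarrow> bool" where "nt l = (\<not> (l \<noteq> [] \<and> hd l = (0, True)))"

lemma tail_ok: "vl L0 \<Longrightarrow> nt L0 \<Longrightarrow>
   vl (W (concat (map (\<lambda>i. epow 0 (v i) @ [(GA, False)]) is)) L0) \<and>
   nt (W (concat (map (\<lambda>i. epow 0 (v i) @ [(GA, False)]) is)) L0)"
proof (induction "is")
  case Nil
  then show ?case by simp
next
  case (Cons i "is")
  define L1 where "L1 = W (concat (map (\<lambda>i. epow 0 (v i) @ [(GA, False)]) is)) L0"
  have h: "vl L1" "nt L1" using Cons L1_def by auto
  have ai: "Ainv L1 = (0, False) # L1" using h(2) unfolding Ainv_def nt_def by auto
  have vv: "vl ((0, False) # L1)" using h(1) mpos by (simp add: vl_def vr_def)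
  have "W (concat (map (\<lambda>i. epow 0 (v i) @ [(GA, False)]) (i # is))) L0 = act (sg 0 (v i)) ((0, False) # L1)"
    using W_epow[OF vv] ai by (simp add: L1_def del: act.simps)
  moreover have "\<exists>c r. act (sg 0 (v i)) ((0, False) # L1) = (c, False) # r" by simp
  ultimately show ?case using act_vl[of "sg 0 (v i)" "(0, False) # L1"] by (auto simp: nt_def simp del: act.simps)
qed

lemma GAfree_W: "\<forall>l\<in>set v. fst l \<noteq> GA \<Longrightarrow> W v [] = []"
proof (induction v)
  case (Cons x v)
  obtain g b where x: "x = (g, b)" by force
  then obtain i where "g = GE i" using Cons.prems by (cases g) auto
  then show ?case using Cons x by (cases b) auto
qed simp

lemma A_pow: "c \<noteq> 0 \<Longrightarrow> W (replicate j (GA, True)) ((c, False) # Z) = replicate j (0, True) @ ((c, False) # Z)"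
proof (induction j)
  case (Suc j)
  have "hd (replicate j (0, True) @ ((c, False) # Z)) \<noteq> (0, False)" using Suc.prems by (cases j) auto
  then show ?case using Suc by (simp add: A_def)
qed simp

lemma detect: assumes "vl L0" "nt L0" "L (sg k s + sg 0 (- s * t)) mod m \<noteq> 0"
  shows "\<exists>c Z. c \<noteq> 0 \<and> W (replicate j (GA, True) @ epow k s @ epow 0 (- s * t) @ [(GA, False)]) L0
            = replicate j (0, True) @ ((c, False) # Z)"
proof -
  have ai: "Ainv L0 = (0, False) # L0" using assms(2) unfolding Ainv_def nt_def by auto
  have vv: "vl ((0, False) # L0)" using assms(1) mpos by (simp add: vl_def vr_def)
  define x where "x = sg k s + sg 0 (- s * t)"
  have s1: "W (epow 0 (- s * t) @ [(GA, False)]) L0 = act (sg 0 (- s * t)) ((0, False) # L0)"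
    using ai W_epow[OF vv] by (simp del: act.simps)
  have "W (epow k s @ epow 0 (- s * t) @ [(GA, False)]) L0 = act (sg k s) (act (sg 0 (- s * t)) ((0, False) # L0))"
    by (simp only: W_append[of "epow k s"] s1 W_epow[OF act_vl])
  also have "\<dots> = act x ((0, False) # L0)" by (simp only: act_add x_def)
  also have "\<dots> = ((L x) mod m, False) # act (up x (L x div m)) L0" by simp
  finally have e: "W (epow k s @ epow 0 (- s * t) @ [(GA, False)]) L0 = ((L x) mod m, False) # act (up x (L x div m)) L0" .
  show ?thesis using A_pow[of "L x mod m" j] e assms(3) unfolding x_def by auto
qed

end


context bsl begin

lemma red_Nil: "red []" by simp

lemma main_loc:
  assumes mM: "m = int M" and RM: "R = r_fun M xi" and M0: "M > 0" and n1: "n \<ge> 1"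
    and tb: "\<forall>i\<in>{1..n}. 0 \<le> t i \<and> t i < int M"
  shows "(in_E M xi (wword n (int M) t)
            \<longleftrightarrow> geq M xi (wword n (int M) t @ [(GE 0, True)]
                         @ wword n (- int M) (\<lambda>i. - t i) @ [(GE 0, False)]) [])
       \<and> (geq M xi (wword n (int M) t @ [(GE 0, True)]
                         @ wword n (- int M) (\<lambda>i. - t i) @ [(GE 0, False)]) []
            \<longleftrightarrow> (\<forall>i\<in>{1..n}. t i = r_fun M xi i))"
proof -
  define G where "G = wword n (int M) t @ [(GE 0, True)] @ wword n (- int M) (\<lambda>i. - t i) @ [(GE 0, False)]"
  show ?thesis
  proof (cases "\<forall>i\<in>{1..n}. t i = r_fun M xi i")
    case True
    have w1: "geq M xi (wword n (int M) t) (epow (Suc n) 1)"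
      using F_chain[of 1 M "Suc n" n t xi] True M0 by (simp add: Fw_end)
    have w2: "geq M xi (wword n (- int M) (\<lambda>i. - t i)) (epow (Suc n) (-1))"
      using F_chain[of "-1" M "Suc n" n "\<lambda>i. - t i" xi] True M0 by (simp add: Fw_end)
    have ie: "in_E M xi (wword n (int M) t)"
      unfolding in_E_def using w1 by (intro exI[of _ "epow (Suc n) 1"]) (simp add: epow_1)
    have "geq M xi G (epow (Suc n) 1 @ [(GE 0, True)] @ epow (Suc n) (-1) @ [(GE 0, False)])"
      unfolding G_def by (intro g_app w1 w2 g_refl)
    moreover have "geq M xi (epow (Suc n) 1 @ [(GE 0, True)] @ epow (Suc n) (-1) @ [(GE 0, False)]) []"
      using geq.rel[OF relator.comm[of M xi "Suc n" 0]] by (simp add: epow_1 epow_m1)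
    ultimately have "geq M xi G []" by (rule geq.trans)
    then show ?thesis using ie True unfolding G_def by simp
  next
    case False
    define P where "P = (\<lambda>i. i \<in> {1..n} \<and> t i \<noteq> r_fun M xi i)"
    have ex: "\<exists>i. P i" using False P_def by auto
    define k where "k = (LEAST i. P i)"
    have Pk: "P k" unfolding k_def by (rule LeastI_ex[OF ex])
    have k1: "1 \<le> k" "k \<le> n" "t k \<noteq> r_fun M xi k" using Pk P_def by auto
    have before: "\<forall>j. 1 \<le> j \<and> j < k \<longrightarrow> t j = r_fun M xi j"
    proof (intro allI impI)
      fix j assume jj: "1 \<le> j \<and> j < k"
      then have "\<not> P j" unfolding k_def by (intro not_less_Least) simp
      then show "t j = r_fun M xi j" using jj k1(2) unfolding P_def by simp
    qed
    have rb: "0 \<le> R k" "R k < m" using r_fun_bounds[OF M0 k1(1), of xi] RM mM by auto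
    have tkb: "0 \<le> t k" "t k < m" using tb k1 mM by auto
    have ne: "t k \<noteq> R k" using k1 RM by simp
    have nz1: "L (sg k 1 + sg 0 (- 1 * t k)) mod m \<noteq> 0"
    proof -
      have "L (sg k 1 + sg 0 (- 1 * t k)) = R k - t k" using k1 by (simp add: L_add L_sg c0_def)
      then show ?thesis using mod_neq[of m "R k" "t k"] rb tkb ne mpos by simp
    qed
    have nz2: "L (sg k (-1) + sg 0 (- (-1) * t k)) mod m \<noteq> 0"
    proof -
      have "L (sg k (-1) + sg 0 (- (-1) * t k)) = t k - R k" using k1 by (simp add: L_add L_sg c0_def)
      then show ?thesis using mod_neq[of m "t k" "R k"] rb tkb ne mpos by simp
    qed
    define j where "j = Suc n - k"
    have j1: "j \<ge> 1" using k1 j_def by simp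
    define tl1 where "tl1 = concat (map (\<lambda>i. epow 0 (- t i) @ [(GA, False)]) [Suc k..<Suc n])"
    define tl2 where "tl2 = concat (map (\<lambda>i. epow 0 (- (- t i)) @ [(GA, False)]) [Suc k..<Suc n])"
    define p1 where "p1 = replicate j (GA, True) @ epow k 1 @ epow 0 (- 1 * t k) @ [(GA, False)]"
    define p2 where "p2 = replicate j (GA, True) @ epow k (-1) @ epow 0 (- (-1) * t k) @ [(GA, False)]"
    have F1: "Fw n 1 t k = p1 @ tl1" unfolding p1_def tl1_def j_def using Fw_split[OF k1(2), of 1 t] by simp
    have F2: "Fw n (-1) (\<lambda>i. - t i) k = p2 @ tl2" unfolding p2_def tl2_def j_def
      using Fw_split[OF k1(2), of "-1" "\<lambda>i. - t i"] by simp
    have c1: "geq M xi (wword n (int M) t) (Fw n 1 t k)"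
      using F_chain[of 1 M k n t xi] M0 k1 before by simp
    have c2: "geq M xi (wword n (- int M) (\<lambda>i. - t i)) (Fw n (-1) (\<lambda>i. - t i) k)"
      using F_chain[of "-1" M k n "\<lambda>i. - t i" xi] M0 k1 before by simp
    have D1: "\<And>L0. vl L0 \<Longrightarrow> nt L0 \<Longrightarrow> \<exists>c Z. W (Fw n 1 t k) L0 = replicate j (0, True) @ ((c, False) # Z)"
    proof -
      fix L0 assume a: "vl L0" "nt L0"
      have tt: "vl (W tl1 L0)" "nt (W tl1 L0)" using tail_ok[OF a, of "\<lambda>i. - t i" "[Suc k..<Suc n]"]
        unfolding tl1_def by auto
      show "\<exists>c Z. W (Fw n 1 t k) L0 = replicate j (0, True) @ ((c, False) # Z)"
        using detect[OF tt nz1, of j] unfolding F1 p1_def by auto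
    qed
    have D2: "\<And>L0. vl L0 \<Longrightarrow> nt L0 \<Longrightarrow> \<exists>c Z. W (Fw n (-1) (\<lambda>i. - t i) k) L0 = replicate j (0, True) @ ((c, False) # Z)"
    proof -
      fix L0 assume a: "vl L0" "nt L0"
      have tt: "vl (W tl2 L0)" "nt (W tl2 L0)" using tail_ok[OF a, of "\<lambda>i. - (- t i)" "[Suc k..<Suc n]"]
        unfolding tl2_def by auto
      show "\<exists>c Z. W (Fw n (-1) (\<lambda>i. - t i) k) L0 = replicate j (0, True) @ ((c, False) # Z)"
        using detect[OF tt nz2, of j] unfolding F2 p2_def by auto
    qed
    have v0: "vl []" "nt []" by (simp_all add: vl_def nt_def)
    have notE: "\<not> in_E M xi (wword n (int M) t)"
    proof
      assume "in_E M xi (wword n (int M) t)"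
      then obtain v where v: "\<forall>l\<in>set v. fst l \<noteq> GA" "geq M xi (wword n (int M) t) v"
        unfolding in_E_def by blast
      have "W (wword n (int M) t) [] = W v []" using geq_W[OF v(2) mM RM red_Nil] .
      also have "\<dots> = []" using GAfree_W[OF v(1)] .
      finally have e0: "W (wword n (int M) t) [] = []" .
      have "W (wword n (int M) t) [] = W (Fw n 1 t k) []" using geq_W[OF c1 mM RM red_Nil] .
      then show False using e0 D1[OF v0] by auto
    qed
    have notG: "\<not> geq M xi G []"
    proof
      assume g: "geq M xi G []"
      have e0: "W G [] = []" using geq_W[OF g mM RM red_Nil] by simp
      have gg: "geq M xi G (Fw n 1 t k @ [(GE 0, True)] @ Fw n (-1) (\<lambda>i. - t i) k @ [(GE 0, False)])"
        unfolding G_def by (intro g_app c1 c2 g_refl)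
      have e1: "W G [] = W (Fw n 1 t k) (act (sg 0 1) (W (Fw n (-1) (\<lambda>i. - t i) k) []))"
        using geq_W[OF gg mM RM red_Nil] by simp
      obtain c Z where cz: "W (Fw n (-1) (\<lambda>i. - t i) k) [] = replicate j (0, True) @ ((c, False) # Z)"
        using D2[OF v0] by blast
      obtain j' where j': "j = Suc j'" using j1 by (cases j) auto
      define Y where "Y = act (sg 0 1) (W (Fw n (-1) (\<lambda>i. - t i) k) [])"
      have "Y = (1, True) # act (down (sg 0 1)) (replicate j' (0, True) @ ((c, False) # Z))"
        unfolding Y_def cz j' by (simp add: lk_sg)
      then have Yn: "nt Y" by (simp add: nt_def)
      have Yv: "vl Y" unfolding Y_def by (rule act_vl)
      show False using e0 e1 D1[OF Yv Yn] unfolding Y_def by auto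
    qed
    show ?thesis using notE notG False unfolding G_def by blast
  qed
qed

end

theorem lemma5p4:
  fixes m n :: nat and xi t :: "nat \<Rightarrow> int"
  assumes "m > 0" and "xi \<in> madic m" and "n \<ge> 1"
    and "\<forall>i\<in>{1..n}. 0 \<le> t i \<and> t i < int m"
  shows "(in_E m xi (wword n (int m) t)
            \<longleftrightarrow> geq m xi (wword n (int m) t @ [(GE 0, True)]
                         @ wword n (- int m) (\<lambda>i. - t i) @ [(GE 0, False)]) [])
       \<and> (geq m xi (wword n (int m) t @ [(GE 0, True)]
                         @ wword n (- int m) (\<lambda>i. - t i) @ [(GE 0, False)]) []
            \<longleftrightarrow> (\<forall>i\<in>{1..n}. t i = r_fun m xi i))"
proof -
  interpret B: bsl "int m" "r_fun m xi" by unfold_locales (use assms(1) in simp)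
  show ?thesis using B.main_loc[OF HOL.refl HOL.refl assms(1) assms(3) assms(4)] .
qed


end
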